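(* There exist two disjoint visibly pushdown alphabets $\widetilde{\Sigma}_1,\widetilde{\Sigma}_2$ and well-matched visibly pushdown languages $P_1\subseteq\widetilde{\Sigma}_1^*$, $P_2\subseteq\widetilde{\Sigma}_2^*$ such that the set of minimal reductions of $P_1\parallel P_2$ under the commutativity relation $\mathbb{I}$ is not countable.
   Context: A visibly pushdown (VP) alphabet $\widetilde{\Sigma}$ is a finite alphabet partitioned into calls $\Sigma^{\mathsf{call}}$, returns $\Sigma^{\mathsf{ret}}$ and internals $\Sigma^{\mathsf{int}}$. In a word over $\widetilde{\Sigma}$, calls and returns are matched like opening and closing parentheses (internals are ignored); unmatched calls (returns) are pending; a word is well-matched if it has no pending calls or returns. A visibly pushdown language (VPL) is a language accepted by a visibly pushdown automaton (a pushdown automaton that pushes exactly one stack symbol on reading a call, pops exactly one on reading a return, and does not touch the stack on an internal). For $\widetilde{\Sigma}=\widetilde{\Sigma}_1\uplus\widetilde{\Sigma}_2$ and $L_i\subseteq\widetilde{\Sigma}_i^*$, the shuffle is $L_1\parallel L_2=\{w\in\widetilde{\Sigma}^*:\Pi_{\widetilde{\Sigma}_i}(w)\in L_i \text{ for } i=1,2\}$, where $\Pi_{\widetilde{\Sigma}_i}$ erases letters not in $\widetilde{\Sigma}_i$. Let $\mathbb{I}=\{(a,b): a\in\widetilde{\Sigma}_i,\ b\in\widetilde{\Sigma}_j,\ i\neq j\}$ and let $\equiv_{\mathbb{I}}$ be the least reflexive transitive relation on $\widetilde{\Sigma}^*$ with $uabv\equiv_{\mathbb{I}}ubav$ whenever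 $(a,b)\in\mathbb{I}$. For a language $L$, a subset $\widehat{L}\subseteq L$ is a reduction if every $\rho\in L$ has some $\sigma\in\widehat{L}$ with $\sigma\equiv_{\mathbb{I}}\rho$; it is minimal if there is exactly one such $\sigma$ for every $\rho$. *)

theory Defs
  imports Main "HOL-Library.Countable_Set"
begin

record vp_alphabet =
  calls :: "nat set"
  rets  :: "nat set"
  ints  :: "nat set"

definition alph :: "vp_alphabet \<Rightarrow> nat set" where
  "alph S = calls S \<union> rets S \<union> ints S"

definition vp_alphabet_wf :: "vp_alphabet \<Rightarrow> bool" where
  "vp_alphabet_wf S \<longleftrightarrow> finite (alph S) \<and>
     calls S \<inter> rets S = {} \<and> calls S \<inter> ints S = {} \<and> rets S \<inter> ints S = {}"

definition vp_union :: "vp_alphabet \<Rightarrow> vp_alphabet \<Rightarrow> vp_alphabet" where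
  "vp_union S1 S2 = \<lparr> calls = calls S1 \<union> calls S2, rets = rets S1 \<union> rets S2,
                       ints = ints S1 \<union> ints S2 \<rparr>"

definition cnt :: "nat set \<Rightarrow> nat list \<Rightarrow> nat" where
  "cnt A w = length (filter (\<lambda>x. x \<in> A) w)"

text \<open>No pending returns (every prefix has at least as many calls as returns)
and no pending calls (equal total numbers).\<close>
definition well_matched :: "vp_alphabet \<Rightarrow> nat list \<Rightarrow> bool" where
  "well_matched S w \<longleftrightarrow>
     (\<forall>k \<le> length w. cnt (rets S) (take k w) \<le> cnt (calls S) (take k w)) \<and>
     cnt (rets S) w = cnt (calls S) w"

text \<open>States and stack symbols are natural numbers; the transition relations,
initial and final states are finite sets (hence finitely many states and stack
symbols are used). A return on the empty stack reads the bottom symbol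
(encoded as None) and leaves the stack empty.\<close>

record vpa =
  v_init  :: "nat set"
  v_final :: "nat set"
  d_call  :: "(nat \<times> nat \<times> nat \<times> nat) set"          \<comment> \<open>(q, c, q', pushed)\<close>
  d_ret   :: "(nat \<times> nat \<times> nat option \<times> nat) set"   \<comment> \<open>(q, r, popped, q')\<close>
  d_int   :: "(nat \<times> nat \<times> nat) set"

definition vpa_finite :: "vpa \<Rightarrow> bool" where
  "vpa_finite A \<longleftrightarrow> finite (v_init A) \<and> finite (v_final A) \<and>
     finite (d_call A) \<and> finite (d_ret A) \<and> finite (d_int A)"

inductive vpa_run :: "vp_alphabet \<Rightarrow> vpa \<Rightarrow> nat \<Rightarrow> nat list \<Rightarrow> nat list \<Rightarrow> nat \<Rightarrow> nat list \<Rightarrow> bool"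
  for S A where
  run_nil: "vpa_run S A q st [] q st"
| run_call: "\<lbrakk> c \<in> calls S; (q, c, q', g) \<in> d_call A; vpa_run S A q' (g # st) w q'' st'' \<rbrakk>
      \<Longrightarrow> vpa_run S A q st (c # w) q'' st''"
| run_ret: "\<lbrakk> r \<in> rets S; (q, r, Some g, q') \<in> d_ret A; vpa_run S A q' st w q'' st'' \<rbrakk>
      \<Longrightarrow> vpa_run S A q (g # st) (r # w) q'' st''"
| run_ret_bot: "\<lbrakk> r \<in> rets S; (q, r, None, q') \<in> d_ret A; vpa_run S A q' [] w q'' st'' \<rbrakk>
      \<Longrightarrow> vpa_run S A q [] (r # w) q'' st''"
| run_int: "\<lbrakk> i \<in> ints S; (q, i, q') \<in> d_int A; vpa_run S A q' st w q'' st'' \<rbrakk>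
      \<Longrightarrow> vpa_run S A q st (i # w) q'' st''"

definition vpa_lang :: "vp_alphabet \<Rightarrow> vpa \<Rightarrow> nat list set" where
  "vpa_lang S A = {w. w \<in> lists (alph S) \<and>
     (\<exists>q0 qf st. q0 \<in> v_init A \<and> qf \<in> v_final A \<and> vpa_run S A q0 [] w qf st)}"

definition is_VPL :: "vp_alphabet \<Rightarrow> nat list set \<Rightarrow> bool" where
  "is_VPL S L \<longleftrightarrow> (\<exists>A. vpa_finite A \<and> L = vpa_lang S A)"

definition well_matched_VPL :: "vp_alphabet \<Rightarrow> nat list set \<Rightarrow> bool" where
  "well_matched_VPL S L \<longleftrightarrow> is_VPL S L \<and> (\<forall>w\<in>L. well_matched S w)"

definition shuffle :: "vp_alphabet \<Rightarrow> vp_alphabet \<Rightarrow> nat list set \<Rightarrow> nat list set \<Rightarrow> nat list set" where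
  "shuffle S1 S2 L1 L2 = {w. w \<in> lists (alph S1 \<union> alph S2) \<and>
      filter (\<lambda>x. x \<in> alph S1) w \<in> L1 \<and> filter (\<lambda>x. x \<in> alph S2) w \<in> L2}"

definition indep :: "vp_alphabet \<Rightarrow> vp_alphabet \<Rightarrow> (nat \<times> nat) set" where
  "indep S1 S2 = (alph S1 \<times> alph S2) \<union> (alph S2 \<times> alph S1)"

inductive swap_step :: "(nat \<times> nat) set \<Rightarrow> nat list \<Rightarrow> nat list \<Rightarrow> bool" for I where
  "(a, b) \<in> I \<Longrightarrow> swap_step I (u @ a # b # v) (u @ b # a # v)"

definition trace_equiv :: "(nat \<times> nat) set \<Rightarrow> nat list \<Rightarrow> nat list \<Rightarrow> bool" where
  "trace_equiv I = (swap_step I)\<^sup>*\<^sup>*"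

definition is_reduction :: "(nat \<times> nat) set \<Rightarrow> nat list set \<Rightarrow> nat list set \<Rightarrow> bool" where
  "is_reduction I L R \<longleftrightarrow> R \<subseteq> L \<and> (\<forall>\<rho>\<in>L. \<exists>\<sigma>\<in>R. trace_equiv I \<sigma> \<rho>)"

definition is_minimal_reduction :: "(nat \<times> nat) set \<Rightarrow> nat list set \<Rightarrow> nat list set \<Rightarrow> bool" where
  "is_minimal_reduction I L R \<longleftrightarrow> is_reduction I L R \<and> (\<forall>\<rho>\<in>L. \<exists>!\<sigma>. \<sigma> \<in> R \<and> trace_equiv I \<sigma> \<rho>)"

end

theory Submission
  imports Defs
begin

definition SA :: "nat \<Rightarrow> vp_alphabet" where
  "SA x = \<lparr> calls = {}, rets = {}, ints = {x} \<rparr>"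

definition AA :: "nat \<Rightarrow> vpa" where
  "AA x = \<lparr> v_init = {0}, v_final = {0}, d_call = {}, d_ret = {}, d_int = {(0, x, 0)} \<rparr>"

lemma alph_SA[simp]: "alph (SA x) = {x}"
  by (simp add: alph_def SA_def)

lemma run_AA: "w \<in> lists {x} \<Longrightarrow> vpa_run (SA x) (AA x) 0 [] w 0 []"
proof (induction w)
  case Nil show ?case by (rule vpa_run.run_nil)
next
  case (Cons a w)
  then show ?case
    by (intro vpa_run.run_int[where q'=0]) (auto simp: SA_def AA_def)
qed

lemma lang_AA: "vpa_lang (SA x) (AA x) = lists {x}"
  unfolding vpa_lang_def using run_AA by (auto simp: AA_def)

lemma wm_SA: "well_matched_VPL (SA x) (lists {x})"
  unfolding well_matched_VPL_def is_VPL_def well_matched_def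
proof (intro conjI ballI allI impI exI[of _ "AA x"])
  show "vpa_finite (AA x)" by (simp add: vpa_finite_def AA_def)
  show "lists {x} = vpa_lang (SA x) (AA x)" using lang_AA by simp
qed (simp_all add: cnt_def SA_def alph_def)

lemma wf_SA: "vp_alphabet_wf (SA x)"
  by (simp add: vp_alphabet_wf_def SA_def alph_def)

lemma shuffle_SA: "shuffle (SA 0) (SA 1) (lists {0}) (lists {1}) = lists {0,1}"
  unfolding shuffle_def by auto

lemma indep_SA: "indep (SA 0) (SA 1) = {(0,1),(1,0)}"
  by (auto simp: indep_def)

abbreviation "II \<equiv> {(0::nat,1::nat),(1,0)}"

lemma swap_cong: "swap_step I x y \<Longrightarrow> swap_step I (p @ x) (p @ y)"
proof (induction rule: swap_step.induct)
  case (1 a b u v)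
  then show ?case using swap_step.intros[of a b I "p @ u" v] by simp
qed

lemma equiv_cong: "trace_equiv I x y \<Longrightarrow> trace_equiv I (p @ x) (p @ y)"
  unfolding trace_equiv_def
proof (induction rule: rtranclp_induct)
  case base then show ?case by simp
next
  case (step y z)
  then show ?case using swap_cong by (metis rtranclp.rtrancl_into_rtrancl)
qed

lemma swap_count: "swap_step I x y \<Longrightarrow> count_list x c = count_list y c"
  by (induction rule: swap_step.induct) auto

lemma equiv_count: "trace_equiv I x y \<Longrightarrow> count_list x c = count_list y c"
  unfolding trace_equiv_def
  by (induction rule: rtranclp_induct) (auto dest: swap_count)

lemma swap_sym: "swap_step II x y \<Longrightarrow> swap_step II y x"
  by (induction rule: swap_step.induct) (auto intro: swap_step.intros)

lemma equiv_sym: "trace_equiv II x y \<Longrightarrow> trace_equiv II y x"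
proof -
  have "symp (swap_step II)" unfolding symp_def using swap_sym by blast
  then have "symp (swap_step II)\<^sup>*\<^sup>*" by (rule symp_rtranclp)
  then show "trace_equiv II x y \<Longrightarrow> trace_equiv II y x"
    unfolding trace_equiv_def by (auto dest: sympD)
qed

lemma equiv_trans: "trace_equiv I x y \<Longrightarrow> trace_equiv I y z \<Longrightarrow> trace_equiv I x z"
  unfolding trace_equiv_def by auto

lemma move1: "trace_equiv II (1 # replicate n 0 @ v) (replicate n 0 @ 1 # v)"
proof (induction n)
  case 0 then show ?case by (simp add: trace_equiv_def)
next
  case (Suc n)
  have "swap_step II ([] @ 1 # 0 # (replicate n 0 @ v)) ([] @ 0 # 1 # (replicate n 0 @ v))"
    by (rule swap_step.intros) simp
  then have "trace_equiv II (1 # replicate (Suc n) 0 @ v) (0 # 1 # replicate n 0 @ v)"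
    by (simp add: trace_equiv_def)
  moreover have "trace_equiv II ([0] @ 1 # replicate n 0 @ v) ([0] @ replicate n 0 @ 1 # v)"
    using equiv_cong[OF Suc.IH] .
  ultimately show ?case using equiv_trans by simp
qed

lemma count_rep[simp]: "count_list (replicate n x) y = (if x = y then n else 0)"
  by (induction n) auto

definition srt :: "nat list \<Rightarrow> nat list" where
  "srt w = replicate (count_list w 0) 0 @ replicate (count_list w 1) 1"

lemma to_srt: "w \<in> lists {0,1} \<Longrightarrow> trace_equiv II w (srt w)"
proof (induction w)
  case Nil then show ?case by (simp add: trace_equiv_def srt_def)
next
  case (Cons x w)
  then have IH: "trace_equiv II w (srt w)" and x: "x = 0 \<or> x = 1" by auto
  show ?case
  proof (cases "x = 0")
    case True
    then show ?thesis using equiv_cong[OF IH, of "[0]"] by (simp add: srt_def)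
  next
    case False
    then have x1: "x = 1" using x by simp
    have "trace_equiv II ([1] @ w) ([1] @ srt w)" using equiv_cong[OF IH] .
    moreover have "trace_equiv II (1 # replicate (count_list w 0) 0 @ replicate (count_list w 1) 1)
        (replicate (count_list w 0) 0 @ 1 # replicate (count_list w 1) 1)" by (rule move1)
    ultimately show ?thesis using x1 equiv_trans
      by (simp add: srt_def replicate_app_Cons_same)
  qed
qed

definition canon :: "nat set \<Rightarrow> nat \<Rightarrow> nat \<Rightarrow> nat list" where
  "canon X n m = (if m = 1 \<and> n \<in> Suc ` X then 1 # replicate n 0 else replicate n 0 @ replicate m 1)"

definition RR :: "nat set \<Rightarrow> nat list set" where
  "RR X = {canon X n m | n m. True}"

lemma canon_lists: "canon X n m \<in> lists {0,1}"
  by (auto simp: canon_def)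

lemma canon_count0: "count_list (canon X n m) 0 = n"
  by (simp add: canon_def)

lemma canon_count1: "count_list (canon X n m) 1 = m"
  by (auto simp: canon_def)

lemma canon_count1'[simp]: "count_list (canon X n m) (Suc 0) = m"
  using canon_count1 by simp

lemma srt_eq: "count_list a 0 = count_list b 0 \<Longrightarrow> count_list a 1 = count_list b 1 \<Longrightarrow> srt a = srt b"
  by (simp add: srt_def)

lemma RR_min: "is_minimal_reduction II (lists {0,1}) (RR X)"
  unfolding is_minimal_reduction_def is_reduction_def
proof (intro conjI ballI)
  show "RR X \<subseteq> lists {0,1}" unfolding RR_def using canon_lists by blast
next
  fix \<rho> :: "nat list" assume r: "\<rho> \<in> lists {0,1}"
  define \<sigma> where "\<sigma> = canon X (count_list \<rho> 0) (count_list \<rho> 1)"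
  have "trace_equiv II \<sigma> (srt \<sigma>)" using to_srt canon_lists \<sigma>_def by blast
  moreover have "srt \<sigma> = srt \<rho>" by (rule srt_eq) (simp_all add: \<sigma>_def canon_count0 canon_count1)
  moreover have "trace_equiv II (srt \<rho>) \<rho>" using to_srt[OF r] equiv_sym by blast
  ultimately have e: "trace_equiv II \<sigma> \<rho>" using equiv_trans by metis
  moreover have s: "\<sigma> \<in> RR X" by (auto simp: RR_def \<sigma>_def)
  ultimately show "\<exists>\<sigma>\<in>RR X. trace_equiv II \<sigma> \<rho>" by blast
  show "\<exists>!\<sigma>. \<sigma> \<in> RR X \<and> trace_equiv II \<sigma> \<rho>"
  proof (rule ex1I[of _ \<sigma>])
    show "\<sigma> \<in> RR X \<and> trace_equiv II \<sigma> \<rho>" using e s by blast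
  next
    fix \<tau> assume "\<tau> \<in> RR X \<and> trace_equiv II \<tau> \<rho>"
    then obtain n m where t: "\<tau> = canon X n m" and te: "trace_equiv II \<tau> \<rho>" by (auto simp: RR_def)
    have "n = count_list \<rho> 0" using equiv_count[OF te, of 0] t canon_count0 by simp
    moreover have "m = count_list \<rho> 1" using equiv_count[OF te, of 1] t canon_count1 by simp
    ultimately show "\<tau> = \<sigma>" using t \<sigma>_def by simp
  qed
qed

lemma RR_inj: "inj RR"
proof (rule injI)
  fix X Y assume eq: "RR X = RR Y"
  show "X = Y"
  proof (rule set_eqI)
    fix k
    have "canon X (Suc k) 1 \<in> RR X" unfolding RR_def by blast
    then have "canon X (Suc k) 1 \<in> RR Y" using eq by simp
    then obtain n m where nm: "canon X (Suc k) 1 = canon Y n m" by (auto simp: RR_def)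
    have "n = Suc k" using arg_cong[OF nm, of "\<lambda>w. count_list w 0"] by (simp add: canon_count0)
    moreover have "m = 1" using arg_cong[OF nm, of "\<lambda>w. count_list w 1"] by (simp add: canon_count1)
    ultimately have nm2: "canon X (Suc k) 1 = canon Y (Suc k) 1" using nm by simp
    show "k \<in> X \<longleftrightarrow> k \<in> Y"
      using nm2 by (auto simp: canon_def split: if_splits)
  qed
qed

lemma unc_natset: "\<not> countable (UNIV :: nat set set)"
proof
  assume "countable (UNIV :: nat set set)"
  then obtain f :: "nat \<Rightarrow> nat set" where "range f = UNIV"
    by (metis UNIV_not_empty uncountable_def)
  then obtain n where "f n = {k. k \<notin> f k}" by (metis UNIV_I imageE)
  then show False by blast
qed

theorem proposition3p2:
  shows "\<exists>S1 S2 P1 P2.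
     vp_alphabet_wf S1 \<and> vp_alphabet_wf S2 \<and> alph S1 \<inter> alph S2 = {} \<and>
     well_matched_VPL S1 P1 \<and> well_matched_VPL S2 P2 \<and>
     \<not> countable {R. is_minimal_reduction (indep S1 S2) (shuffle S1 S2 P1 P2) R}"
proof (intro exI conjI)
  show "vp_alphabet_wf (SA 0)" "vp_alphabet_wf (SA 1)" by (rule wf_SA)+
  show "alph (SA 0) \<inter> alph (SA 1) = {}" by simp
  show "well_matched_VPL (SA 0) (lists {0})" "well_matched_VPL (SA 1) (lists {1})" by (rule wm_SA)+
  show "\<not> countable {R. is_minimal_reduction (indep (SA 0) (SA 1)) (shuffle (SA 0) (SA 1) (lists {0}) (lists {1})) R}"
  proof
    assume c: "countable {R. is_minimal_reduction (indep (SA 0) (SA 1)) (shuffle (SA 0) (SA 1) (lists {0}) (lists {1})) R}"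
    have "range RR \<subseteq> {R. is_minimal_reduction (indep (SA 0) (SA 1)) (shuffle (SA 0) (SA 1) (lists {0}) (lists {1})) R}"
    proof
      fix R assume "R \<in> range RR"
      then obtain X where "R = RR X" by blast
      have "is_minimal_reduction (indep (SA 0) (SA 1)) (shuffle (SA 0) (SA 1) (lists {0}) (lists {1})) (RR X)"
        unfolding indep_SA shuffle_SA by (rule RR_min)
      then show "R \<in> {R. is_minimal_reduction (indep (SA 0) (SA 1)) (shuffle (SA 0) (SA 1) (lists {0}) (lists {1})) R}"
        using \<open>R = RR X\<close> by simp
    qed
    then have "countable (range RR)" using c countable_subset by blast
    then have "countable (UNIV :: nat set set)" using RR_inj by (metis countable_image_inj_eq)
    then show False using unc_natset by blast
  qed
qed

end
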